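(* Let $m\ge2$ be an integer and let $X$ be the conjugacy class of all transpositions in $S_m$, viewed as a quandle under conjugation $x^y=y^{-1}xy$. Then for every positive integer $n$ and every $s\in X^n$ whose entries generate $X$, the restriction to the stabilizer of $s$ in $B_n$ of the homomorphism $B_n\to S_n$ is surjective.
   Context: Entries generate $X$ if no proper subset of $X$ closed under $x^y$ contains them all. $B_n$ acts on $X^n$ from the right by $(\dots,x_i,x_{i+1},\dots)^{\sigma_i}=(\dots,x_{i+1},x_i^{x_{i+1}},\dots)$, and $B_n\to S_n$ sends $\sigma_i\mapsto(i\ i+1)$. *)

theory Defs
  imports "HOL-Combinatorics.Combinatorics"
begin

text \<open>Elements of S_m are bijections of nat permuting {0..<m} (fixing all other points).
  The quandle X of transpositions in S_m, with x^y = y^-1 x y.\<close>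

definition transp_quandle :: "nat \<Rightarrow> (nat \<Rightarrow> nat) set" where
  "transp_quandle m = {Transposition.transpose a b | a b. a < m \<and> b < m \<and> a \<noteq> b}"

definition qop :: "(nat \<Rightarrow> nat) \<Rightarrow> (nat \<Rightarrow> nat) \<Rightarrow> (nat \<Rightarrow> nat)" where
  "qop x y = inv y \<circ> x \<circ> y"

text \<open>Inverse of right multiplication by y: qinv (qop x y) y = x.\<close>
definition qinv :: "(nat \<Rightarrow> nat) \<Rightarrow> (nat \<Rightarrow> nat) \<Rightarrow> (nat \<Rightarrow> nat)" where
  "qinv z y = y \<circ> z \<circ> inv y"

definition generates :: "(nat \<Rightarrow> nat) set \<Rightarrow> (nat \<Rightarrow> nat) list \<Rightarrow> bool" where
  "generates X s \<longleftrightarrow>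
     (\<forall>Y. Y \<subseteq> X \<and> (\<forall>x\<in>Y. \<forall>y\<in>Y. qop x y \<in> Y) \<and> set s \<subseteq> Y \<longrightarrow> Y = X)"

text \<open>Braids in B_n are represented by words in the Artin generators:
  a letter (i, True) is sigma_(i+1), (i, False) is its inverse (0-indexed positions, i+1 < n).
  Every element of B_n is represented by such a word.\<close>
type_synonym braid_word = "(nat \<times> bool) list"

definition braid_word :: "nat \<Rightarrow> braid_word \<Rightarrow> bool" where
  "braid_word n w \<longleftrightarrow> (\<forall>g\<in>set w. Suc (fst g) < n)"

fun act_gen :: "(nat \<Rightarrow> nat) list \<Rightarrow> nat \<times> bool \<Rightarrow> (nat \<Rightarrow> nat) list" where
  "act_gen s (i, True) = s[i := s ! Suc i, Suc i := qop (s ! i) (s ! Suc i)]"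
| "act_gen s (i, False) = s[i := qinv (s ! Suc i) (s ! i), Suc i := s ! i]"

definition act :: "(nat \<Rightarrow> nat) list \<Rightarrow> braid_word \<Rightarrow> (nat \<Rightarrow> nat) list" where
  "act s w = foldl act_gen s w"

fun braid_perm :: "braid_word \<Rightarrow> nat \<Rightarrow> nat" where
  "braid_perm [] = id"
| "braid_perm (g # w) = Transposition.transpose (fst g) (Suc (fst g)) \<circ> braid_perm w"

end

theory Submission imports Defs begin

abbreviation tr :: "nat \<Rightarrow> nat \<Rightarrow> nat \<Rightarrow> nat" where "tr \<equiv> Transposition.transpose"

lemma act_append: "act s (w1 @ w2) = act (act s w1) w2"
  by (simp add: act_def)

lemma act_Cons: "act s (g # w) = act (act_gen s g) w"
  by (simp add: act_def)

lemma act_Nil: "act s [] = s" by (simp add: act_def)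

lemma braid_perm_append: "braid_perm (w1 @ w2) = braid_perm w1 \<circ> braid_perm w2"
  by (induction w1) auto

lemma move_left:
  "act (A @ B @ y # C) (map (\<lambda>i. (i, True)) (rev [length A..<length A + length B]))
    = A @ y # map (\<lambda>c. qop c y) B @ C"
proof (induction B arbitrary: C rule: rev_induct)
  case Nil
  then show ?case by (simp add: act_Nil)
next
  case (snoc b B)
  have e: "rev [length A..<length A + length (B @ [b])] = (length A + length B) # rev [length A..<length A + length B]"
    by simp
  have g: "act_gen (A @ (B @ [b]) @ y # C) (length A + length B, True) = A @ B @ y # (qop b y # C)"
    by (simp add: nth_append list_update_append)
  show ?case unfolding e by (simp only: list.map act_Cons g snoc) simp
qed

lemma move_right:
  "act (A @ z # B @ C) (map (\<lambda>i. (i, False)) [length A..<length A + length B])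
    = A @ map (\<lambda>c. qinv c z) B @ z # C"
proof (induction B arbitrary: A)
  case Nil
  then show ?case by (simp add: act_Nil)
next
  case (Cons b B)
  have e: "[length A..<length A + length (b # B)] = length A # [length (A @ [qinv b z])..<length (A @ [qinv b z]) + length B]"
    by (simp add: upt_rec)
  have g: "act_gen (A @ z # (b # B) @ C) (length A, False) = (A @ [qinv b z]) @ z # B @ C"
    by (simp add: nth_append list_update_append)
  show ?case unfolding e by (simp only: list.map act_Cons g Cons) simp
qed

definition band :: "nat \<Rightarrow> nat \<Rightarrow> braid_word" where
  "band j l = map (\<lambda>i. (i, True)) (rev [Suc j..<Suc j + l]) @ [(j, True)] @ map (\<lambda>i. (i, False)) [Suc j..<Suc j + l]"

lemma band_act:
  "act (A @ x # B @ y # C) (band (length A) (length B))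
    = A @ y # map (\<lambda>c. qinv (qop c y) (qop x y)) B @ qop x y # C"
proof -
  have 1: "act ((A @ [x]) @ B @ y # C) (map (\<lambda>i. (i, True)) (rev [length (A@[x])..<length (A@[x]) + length B]))
    = (A @ [x]) @ y # map (\<lambda>c. qop c y) B @ C" by (rule move_left)
  have 2: "act_gen ((A @ [x]) @ y # map (\<lambda>c. qop c y) B @ C) (length A, True) = A @ y # qop x y # map (\<lambda>c. qop c y) B @ C"
    by (simp add: nth_append list_update_append)
  have 3: "act ((A @ [y]) @ qop x y # map (\<lambda>c. qop c y) B @ C) (map (\<lambda>i. (i, False)) [length (A@[y])..<length (A@[y]) + length (map (\<lambda>c. qop c y) B)])
    = (A @ [y]) @ map (\<lambda>c. qinv c (qop x y)) (map (\<lambda>c. qop c y) B) @ qop x y # C"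
    by (rule move_right)
  show ?thesis using 1 2 3 unfolding band_def act_append
    by (simp add: act_Cons act_Nil)
qed

lemma band_perm: "braid_perm (band j l) = tr j (Suc j + l)"
proof (induction l)
  case 0
  then show ?case by (simp add: band_def)
next
  case (Suc l)
  have "braid_perm (band j (Suc l)) = tr (Suc j + l) (Suc (Suc j + l)) \<circ> braid_perm (band j l) \<circ> tr (Suc j + l) (Suc (Suc j + l))"
    by (simp add: band_def braid_perm_append comp_assoc)
  also have "\<dots> = tr j (Suc (Suc j + l))" unfolding Suc
    by (metis Suc_n_not_le_n le_add1 less_Suc_eq_le transpose_comp_triple transpose_commute le_SucI add_Suc_right nat.inject)
  finally show ?case by simp
qed

lemma band_word: "Suc j + l < n \<Longrightarrow> braid_word n (band j l)"
  by (auto simp: band_def braid_word_def)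


lemma tr_tr_comp [simp]: "tr a b \<circ> (tr a b \<circ> f) = f"
  by (simp add: comp_assoc[symmetric])

lemma conj_tr: "tr c d \<circ> tr a b \<circ> tr c d = tr (tr c d a) (tr c d b)"
  by (auto simp: fun_eq_iff Transposition.transpose_def)

lemma qop_tr: "qop x (tr c d) = tr c d \<circ> x \<circ> tr c d"
  by (simp add: qop_def)

lemma f_tr: "qinv (qop e (tr c d)) (qop (tr a b) (tr c d)) = tr c d \<circ> tr a b \<circ> e \<circ> tr a b \<circ> tr c d"
proof -
  have "inv (qop (tr a b) (tr c d)) = qop (tr a b) (tr c d)" by (simp add: qop_tr conj_tr)
  then show ?thesis unfolding qinv_def by (simp add: qop_tr comp_assoc)
qed

lemma decomp:
  assumes "j < k" "k < length s"
  shows "\<exists>A B C. s = A @ s!j # B @ s!k # C \<and> length A = j \<and> length B = k - j - 1"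
proof -
  define A where "A = take j s"
  define D where "D = drop (Suc j) s"
  have s1: "s = A @ s!j # D" unfolding A_def D_def using assms by (simp add: id_take_nth_drop)
  have lD: "k - j - 1 < length D" using assms by (simp add: D_def)
  have Dk: "D ! (k - j - 1) = s ! k" using assms by (simp add: D_def)
  define B where "B = take (k - j - 1) D"
  define C where "C = drop (Suc (k - j - 1)) D"
  have "D = B @ s!k # C" unfolding B_def C_def using lD Dk id_take_nth_drop by metis
  moreover have "length A = j" using assms by (simp add: A_def)
  moreover have "length B = k - j - 1" using lD by (simp add: B_def)
  ultimately show ?thesis using s1 by blast
qed

lemma stab_eq:
  assumes "j < k" "k < length s" "s!j = s!k" "s!j = tr a b"
  shows "\<exists>w. braid_word (length s) w \<and> act s w = s \<and> braid_perm w = tr j k"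
proof -
  obtain A B C where s: "s = A @ s!j # B @ s!k # C" and lA: "length A = j" and lB: "length B = k - j - 1"
    using decomp[OF assms(1,2)] by blast
  have kk: "Suc j + (k - j - 1) = k" using assms by simp
  have "act s (band j (k - j - 1)) = A @ s!k # map (\<lambda>c. qinv (qop c (s!k)) (qop (s!j) (s!k))) B @ qop (s!j) (s!k) # C"
    using band_act[of A "s!j" B "s!k" C] s unfolding lA lB by simp
  also have "\<dots> = A @ tr a b # B @ tr a b # C"
    unfolding assms(3)[symmetric] assms(4) by (simp add: qinv_def qop_tr fun_eq_iff map_idI)
  also have "\<dots> = s" using s assms(3,4) by simp
  finally have "act s (band j (k - j - 1)) = s" .
  moreover have "braid_perm (band j (k - j - 1)) = tr j k" using band_perm kk by simp
  moreover have "braid_word (length s) (band j (k - j - 1))" using band_word kk assms by simp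
  ultimately show ?thesis by blast
qed

lemma stab_s3:
  assumes "j < k" "k < length s" "s!j = tr p q" "s!k = tr q r" "distinct [p, q, r]"
  shows "\<exists>w. braid_word (length s) w \<and> act s w = s \<and> braid_perm w = tr j k"
proof -
  obtain A B C where s: "s = A @ s!j # B @ s!k # C" and lA: "length A = j" and lB: "length B = k - j - 1"
    using decomp[OF assms(1,2)] by blast
  have kk: "Suc j + (k - j - 1) = k" using assms by simp
  define b where "b = band j (k - j - 1)"
  define x where "x = tr p q"
  define y where "y = tr q r"
  define z where "z = tr p r"
  have z1: "qop x y = z" using assms(5) unfolding x_def y_def z_def qop_tr conj_tr by auto
  have z2: "qop y z = x" using assms(5) unfolding x_def y_def z_def qop_tr conj_tr
    by (auto simp: transpose_commute)
  have z3: "qop z x = y" using assms(5) unfolding x_def y_def z_def qop_tr conj_tr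
    by (auto simp: transpose_commute)
  have ss: "s = A @ x # B @ y # C" using s assms(3,4) x_def y_def by simp
  have a1: "act s b = A @ y # map (\<lambda>c. qinv (qop c y) (qop x y)) B @ z # C"
    using band_act[of A x B y C] ss z1 unfolding b_def lA lB by simp
  have a2: "act (act s b) b = A @ z # map (\<lambda>c. qinv (qop c z) (qop y z)) (map (\<lambda>c. qinv (qop c y) (qop x y)) B) @ x # C"
    unfolding a1 using band_act[of A y "map (\<lambda>c. qinv (qop c y) (qop x y)) B" z C] z2 unfolding b_def lA by (simp add: lB)
  have a3: "act (act (act s b) b) b = A @ x # map (\<lambda>c. qinv (qop c x) (qop z x)) (map (\<lambda>c. qinv (qop c z) (qop y z)) (map (\<lambda>c. qinv (qop c y) (qop x y)) B)) @ y # C"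
    unfolding a2 using band_act[of A z "map (\<lambda>c. qinv (qop c z) (qop y z)) (map (\<lambda>c. qinv (qop c y) (qop x y)) B)" x C] z3 unfolding b_def lA by (simp add: lB)
  have "act s (b @ b @ b) = s"
    unfolding act_append a3 unfolding x_def y_def z_def f_tr
    using ss x_def y_def by (simp add: fun_eq_iff map_idI)
  moreover have "braid_perm (b @ b @ b) = tr j k" using band_perm kk
    by (simp add: b_def braid_perm_append comp_assoc)
  moreover have "braid_word (length s) (b @ b @ b)"
  proof -
    have "braid_word (length s) b" using band_word[of j "k - j - 1" "length s"] kk assms unfolding b_def by simp
    then show ?thesis unfolding braid_word_def by auto
  qed
  ultimately show ?thesis by blast
qed


lemma share:
  assumes "x \<in> transp_quandle m" "y \<in> transp_quandle m" "x v \<noteq> v" "y v \<noteq> v"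
  shows "x = y \<or> (\<exists>p q r. distinct [p, q, r] \<and> x = tr p q \<and> y = tr q r)"
proof -
  obtain a b where x: "x = tr a b" "a \<noteq> b" using assms(1) unfolding transp_quandle_def by blast
  obtain c d where y: "y = tr c d" "c \<noteq> d" using assms(2) unfolding transp_quandle_def by blast
  have "\<exists>b'. x = tr v b' \<and> b' \<noteq> v" using x assms(3)
    by (metis transpose_apply_other transpose_commute)
  then obtain b' where b': "x = tr v b'" "b' \<noteq> v" by blast
  have "\<exists>d'. y = tr v d' \<and> d' \<noteq> v" using y assms(4)
    by (metis transpose_apply_other transpose_commute)
  then obtain d' where d': "y = tr v d'" "d' \<noteq> v" by blast
  show ?thesis
  proof (cases "b' = d'")
    case True then show ?thesis using b' d' by simp
  next
    case False
    then have "distinct [b', v, d'] \<and> x = tr b' v \<and> y = tr v d'" using b' d' by (simp add: transpose_commute)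
    then show ?thesis by blast
  qed
qed

lemma tr_eq_cases:
  assumes "tr a c = tr a' c'" "a \<noteq> c"
  shows "(a' = a \<and> c' = c) \<or> (a' = c \<and> c' = a)"
proof -
  have 1: "tr a' c' a = c" using assms(1)[symmetric] by simp
  have 2: "tr a' c' c = a" using assms(1)[symmetric] by simp
  show ?thesis using 1 2 assms(2) unfolding Transposition.transpose_def by (auto split: if_splits)
qed

theorem proposition4p40:
  fixes m n :: nat and s :: "(nat \<Rightarrow> nat) list"
  assumes "m \<ge> 2" and "n \<ge> 1"
    and "length s = n" and "set s \<subseteq> transp_quandle m"
    and "generates (transp_quandle m) s"
  shows "\<forall>p. p permutes {0..<n} \<longrightarrow>
           (\<exists>w. braid_word n w \<and> act s w = s \<and> braid_perm w = p)"
proof -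
  define X where "X = transp_quandle m"
  define H where "H = {p. \<exists>w. braid_word n w \<and> act s w = s \<and> braid_perm w = p}"
  have sX: "\<And>k. k < n \<Longrightarrow> s ! k \<in> X" using assms(3,4) nth_mem X_def by blast
  have Hid: "id \<in> H" unfolding H_def
    by (rule CollectI, rule exI[of _ "[]"]) (simp add: braid_word_def act_Nil)
  have Hcomp: "p \<circ> q \<in> H" if pq: "p \<in> H" "q \<in> H" for p q
  proof -
    obtain w1 where w1: "braid_word n w1" "act s w1 = s" "braid_perm w1 = p" using pq(1) H_def by blast
    obtain w2 where w2: "braid_word n w2" "act s w2 = s" "braid_perm w2 = q" using pq(2) H_def by blast
    have "braid_word n (w1 @ w2) \<and> act s (w1 @ w2) = s \<and> braid_perm (w1 @ w2) = p \<circ> q"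
      using w1 w2 by (auto simp: braid_word_def act_append braid_perm_append)
    then show ?thesis unfolding H_def by blast
  qed
  have adj_lt: "tr j k \<in> H" if jk: "j < k" "k < n" "(s!j) v \<noteq> v" "(s!k) v \<noteq> v" for j k v
  proof -
    have "s!j = s!k \<or> (\<exists>p q r. distinct [p, q, r] \<and> s!j = tr p q \<and> s!k = tr q r)"
      using share[of "s!j" m "s!k" v] sX that unfolding X_def by auto
    then show ?thesis
    proof
      assume e: "s!j = s!k"
      obtain a b where "s!j = tr a b" using sX[of j] jk unfolding X_def transp_quandle_def by auto
      then show ?thesis using stab_eq[of j k s a b] e that assms(3) unfolding H_def by auto
    next
      assume "\<exists>p q r. distinct [p, q, r] \<and> s!j = tr p q \<and> s!k = tr q r"
      then obtain p q r where "distinct [p, q, r]" "s!j = tr p q" "s!k = tr q r" by blast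
      then show ?thesis using stab_s3[of j k s p q r] that assms(3) unfolding H_def by auto
    qed
  qed
  have adj: "tr j k \<in> H" if "j < n" "k < n" "(s!j) v \<noteq> v" "(s!k) v \<noteq> v" for j k v
  proof -
    consider "j < k" | "j = k" | "k < j" by linarith
    then show ?thesis
    proof cases
      case 1 then show ?thesis using adj_lt that by blast
    next
      case 2 then show ?thesis using Hid by simp
    next
      case 3 then show ?thesis using adj_lt[of k j v] that by (simp add: transpose_commute)
    qed
  qed
  define C where "C = {k. k < n \<and> tr 0 k \<in> H}"
  have C0: "0 \<in> C" using assms(2) Hid by (simp add: C_def)
  have Ccl: "k \<in> C" if "j \<in> C" "k < n" "(s!j) v \<noteq> v" "(s!k) v \<noteq> v" for j k v
  proof -
    have jk: "tr j k \<in> H" using adj[of j k v] that C_def by blast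
    have j0: "tr 0 j \<in> H" "j < n" using that(1) C_def by auto
    have "tr 0 k \<in> H"
    proof (cases "j = 0 \<or> k = 0 \<or> j = k")
      case True then show ?thesis using jk j0 Hid by auto
    next
      case False
      then have "tr 0 k = tr 0 j \<circ> tr j k \<circ> tr 0 j" by (simp add: transpose_comp_triple)
      then show ?thesis using Hcomp jk j0 by metis
    qed
    then show ?thesis using that(2) C_def by blast
  qed
  define V where "V = {v. \<exists>j\<in>C. (s!j) v \<noteq> v}"
  have Call: "C = {0..<n}"
  proof (rule ccontr)
    assume nC: "C \<noteq> {0..<n}"
    have "C \<subseteq> {0..<n}" unfolding C_def by auto
    then have "\<exists>k. k < n \<and> k \<notin> C" using nC by (metis atLeastLessThan_iff subsetI subset_antisym zero_le)
    then obtain k where k: "k < n" "k \<notin> C" by blast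
    define Y where "Y = {tr a b | a b. a < m \<and> b < m \<and> a \<noteq> b \<and> (a \<in> V \<longleftrightarrow> b \<in> V)}"
    have YX: "Y \<subseteq> X" unfolding Y_def X_def transp_quandle_def by blast
    have Ycl: "\<forall>x\<in>Y. \<forall>y\<in>Y. qop x y \<in> Y"
    proof (intro ballI)
      fix x y assume "x \<in> Y" "y \<in> Y"
      then obtain a b c d where x: "x = tr a b" "a < m" "b < m" "a \<noteq> b" "a \<in> V \<longleftrightarrow> b \<in> V"
        and y: "y = tr c d" "c < m" "d < m" "c \<noteq> d" "c \<in> V \<longleftrightarrow> d \<in> V"
        unfolding Y_def by blast
      have q: "qop x y = tr (tr c d a) (tr c d b)" using x y by (simp add: qop_tr conj_tr)
      have V1: "tr c d u \<in> V \<longleftrightarrow> u \<in> V" for u using y(5)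
        by (cases "u = c"; cases "u = d") auto
      have "tr c d a < m" "tr c d b < m" using x y by (auto simp: Transposition.transpose_def)
      moreover have "tr c d a \<noteq> tr c d b" using x(4) by (metis transpose_eq_imp_eq)
      moreover have "tr c d a \<in> V \<longleftrightarrow> tr c d b \<in> V" using V1 x(5) by simp
      ultimately show "qop x y \<in> Y" unfolding q Y_def by blast
    qed
    have notC: "a \<notin> V" if "i < n" "i \<notin> C" "(s!i) a \<noteq> a" for i a
    proof
      assume "a \<in> V"
      then obtain j where "j \<in> C" "(s!j) a \<noteq> a" unfolding V_def by blast
      then have "i \<in> C" using Ccl that by blast
      then show False using that by blast
    qed
    have sY: "set s \<subseteq> Y"
    proof
      fix x assume "x \<in> set s"
      then obtain i where i: "i < n" "s!i = x" using assms(3) by (auto simp: in_set_conv_nth)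
      obtain a b where ab: "x = tr a b" "a < m" "b < m" "a \<noteq> b" using sX i unfolding X_def transp_quandle_def by blast
      have "a \<in> V \<longleftrightarrow> b \<in> V"
      proof (cases "i \<in> C")
        case True
        have "(s!i) a \<noteq> a" "(s!i) b \<noteq> b" using i ab by auto
        then have "a \<in> V" "b \<in> V" unfolding V_def using True by blast+
        then show ?thesis by simp
      next
        case False
        then have "a \<notin> V" "b \<notin> V" using notC[of i a] notC[of i b] i ab by auto
        then show ?thesis by simp
      qed
      then show "x \<in> Y" using ab unfolding Y_def by blast
    qed
    have "Y = X" using assms(5) YX Ycl sY unfolding generates_def X_def by blast
    obtain a b where ab: "s!0 = tr a b" "a < m" "b < m" "a \<noteq> b"
      using sX[of 0] assms(2) unfolding X_def transp_quandle_def by auto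
    have aV: "a \<in> V" unfolding V_def using C0 ab by (intro CollectI bexI[of _ 0]) auto
    obtain c d where cd: "s!k = tr c d" "c < m" "d < m" "c \<noteq> d"
      using sX[of k] k unfolding X_def transp_quandle_def by auto
    have cV: "c \<notin> V" using notC[of k c] k cd by simp
    have "tr a c \<in> X" unfolding X_def transp_quandle_def using ab cd aV cV by blast
    then have "tr a c \<in> Y" using \<open>Y = X\<close> by simp
    then obtain a' c' where ac: "tr a c = tr a' c'" "a' \<in> V \<longleftrightarrow> c' \<in> V" unfolding Y_def by blast
    have "a \<noteq> c" using aV cV by blast
    then have "(a' = a \<and> c' = c) \<or> (a' = c \<and> c' = a)" using tr_eq_cases[OF ac(1)] by blast
    then show False using ac(2) aV cV by (elim disjE) simp_all
  qed
  have h0: "tr 0 k \<in> H" if "k < n" for k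
  proof -
    have "k \<in> C" using Call that by simp
    then show ?thesis unfolding C_def by simp
  qed
  have all: "tr j k \<in> H" if jk: "j < n" "k < n" for j k
  proof (cases "j = 0 \<or> k = 0 \<or> j = k")
    case True
    have a: "tr 0 k \<in> H" using h0 jk by blast
    have b: "tr 0 j \<in> H" using h0 jk by blast
    have c: "tr j 0 = tr 0 j" by (rule transpose_commute)
    show ?thesis
    proof (cases "j = 0")
      case True then show ?thesis using a by simp
    next
      case False
      then have "k = 0 \<or> j = k" using \<open>j = 0 \<or> k = 0 \<or> j = k\<close> by blast
      then show ?thesis
      proof
        assume "k = 0" then show ?thesis using b c by simp
      next
        assume "j = k" then show ?thesis using Hid by simp
      qed
    qed
  next
    case False
    then have e: "tr j k = tr j 0 \<circ> tr 0 k \<circ> tr j 0" by (simp add: transpose_comp_triple)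
    have a: "tr 0 k \<in> H" using h0 jk by blast
    have b: "tr 0 j \<in> H" using h0 jk by blast
    have c: "tr j 0 = tr 0 j" by (rule transpose_commute)
    have "tr j 0 \<circ> tr 0 k \<in> H" using Hcomp[OF b a] c by simp
    then have "tr j 0 \<circ> tr 0 k \<circ> tr j 0 \<in> H" using Hcomp b c by simp
    then show ?thesis using e by simp
  qed
  show ?thesis
  proof (intro allI impI)
    fix p assume pp: "p permutes {0..<n}"
    have "p \<in> H"
    proof (rule permutes_induct[OF pp finite_atLeastLessThan])
      show "id \<in> H" by (rule Hid)
    next
      fix a b q assume "a \<in> {0..<n}" "b \<in> {0..<n}" "q \<in> H"
      then show "tr a b \<circ> q \<in> H" using Hcomp all by simp
    qed
    then show "\<exists>w. braid_word n w \<and> act s w = s \<and> braid_perm w = p" unfolding H_def by blast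
  qed
qed

end
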